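(* Let $\mathcal{C}\subseteq\mathbb{F}^n$ be an $\mathbb{F}$-linear code of dimension $k$ and let $M_{\mathcal{C}}=(\mathbf{K}^{\mathbf{n}},\rho_{\mathcal{C}})$ be the associated sum-matroid. Then for $i=1,\dots,k$, $d^S_i(M_{\mathcal{C}})=d_{SR,i}(\mathcal{C})$.
   Context: Setting: $\ell,n_1,\dots,n_\ell$ positive integers, $K_1,\dots,K_\ell$ finite fields with a common finite extension $\mathbb{F}$, $m_i=[\mathbb{F}:K_i]$, $n=\sum n_i$. $\mathcal{P}(\mathbf{K}^{\mathbf{n}})=\mathcal{P}(K_1^{n_1})\times\cdots\times\mathcal{P}(K_\ell^{n_\ell})$, $\mathcal{P}(K_i^{n_i})$ the lattice of $K_i$-subspaces of $K_i^{n_i}$, with componentwise inclusion; $\mathrm{Rk}(\mathcal{L})=\sum_i\dim_{K_i}\mathcal{L}_i$; $\mathbf{K}^{\mathbf{n}}=(K_1^{n_1},\dots,K_\ell^{n_\ell})$. For $\mathbf{c}=(\mathbf{c}^{(1)},\dots,\mathbf{c}^{(\ell)})\in\mathbb{F}^n$, $\mathbf{c}^{(i)}\in\mathbb{F}^{n_i}$, let $\Gamma_i(\mathbf{c}^{(i)})$ be the $m_i\times n_i$ matrix over $K_i$ whose columns are the coordinate vectors of the entries of $\mathbf{c}^{(i)}$ w.r.t. a fixed basis of $\mathbb{F}/K_i$; $\mathrm{supp}(\mathbf{c})=(E_1,\dots,E_\ell)$ with $E_i$ the $K_i$-row space of $\Gamma_i(\mathbf{c}^{(i)})$. For $\mathcal{L}\in\mathcal{P}(\mathbf{K}^{\mathbf{n}})$,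 $\mathcal{V}_{\mathcal{L}}=\{\mathbf{c}\in\mathbb{F}^n:\mathrm{supp}(\mathbf{c})\subseteq\mathcal{L}\}$ (an $\mathbb{F}$-subspace). The $i$-th generalized sum-rank weight is $d_{SR,i}(\mathcal{C})=\min\{\mathrm{Rk}(\mathcal{L}):\mathcal{L}\in\mathcal{P}(\mathbf{K}^{\mathbf{n}}),\ \dim_{\mathbb{F}}(\mathcal{C}\cap\mathcal{V}_{\mathcal{L}})\ge i\}$. $\mathcal{C}^\perp$ is the dual of $\mathcal{C}$ in $\mathbb{F}^n$. For $\mathcal{L}=(\mathcal{L}_1,\dots,\mathcal{L}_\ell)$ with $N_i=\dim_{K_i}\mathcal{L}_i$, $N=\sum N_i$, let $\mathbf{A}_i$ be an $N_i\times n_i$ generator matrix of $\mathcal{L}_i$ over $K_i$, $\mathbf{A}=\mathrm{diag}(\mathbf{A}_1,\dots,\mathbf{A}_\ell)$, $\Pi_{\mathcal{L}}(\mathbf{x})=\mathbf{x}\mathbf{A}^T\in\mathbb{F}^N$, and $\rho_{\mathcal{C}}(\mathcal{L})=\dim_{\mathbb{F}}\Pi_{\mathcal{L}}(\mathcal{C}^\perp)$. For a sum-matroid $M$ with rank function $\rho$, its nullity is $\eta(\mathcal{L})=\mathrm{Rk}(\mathcal{L})-\rho(\mathcal{L})$ and its $i$-th generalized weight is $d^S_i(M)=\min\{\mathrm{Rk}(\mathcal{L}):\mathcal{L}\in\mathcal{P}(\mathbf{K}^{\mathbf{n}}),\ \eta(\mathcal{L})=i\}$ for $i=1,\dots,\eta(\mathbf{K}^{\mathbf{n}})$.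 *)

theory Defs
  imports Main
begin

text \<open>The big field \<open>\<bbbF>\<close> is a finite field type; the fields \<open>K\<^sub>i\<close> are subfields of it.\<close>

definition subfield :: "'a::field set \<Rightarrow> bool" where
  "subfield K \<longleftrightarrow> 0 \<in> K \<and> 1 \<in> K \<and> (\<forall>x\<in>K. \<forall>y\<in>K. x + y \<in> K \<and> x * y \<in> K)
     \<and> (\<forall>x\<in>K. - x \<in> K \<and> inverse x \<in> K)"

definition kspan :: "'a::field set \<Rightarrow> ('b \<Rightarrow> 'a) set \<Rightarrow> ('b \<Rightarrow> 'a) set" where
  "kspan K S = {v. \<exists>T a. finite T \<and> T \<subseteq> S \<and> (\<forall>u\<in>T. a u \<in> K) \<and>
                        v = (\<lambda>x. \<Sum>u\<in>T. a u * u x)}"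

definition ksubspace :: "'a::field set \<Rightarrow> ('b \<Rightarrow> 'a) set \<Rightarrow> bool" where
  "ksubspace K V \<longleftrightarrow> (\<lambda>_. 0) \<in> V \<and> (\<forall>u\<in>V. \<forall>v\<in>V. (\<lambda>x. u x + v x) \<in> V)
     \<and> (\<forall>a\<in>K. \<forall>v\<in>V. (\<lambda>x. a * v x) \<in> V)"

definition kdim :: "'a::field set \<Rightarrow> ('b \<Rightarrow> 'a) set \<Rightarrow> nat" where
  "kdim K V = (LEAST d. \<exists>B. finite B \<and> card B = d \<and> B \<subseteq> V \<and> kspan K B = V)"

text \<open>K^m, as functions nat => 'a vanishing from index m on.\<close>
definition kvecs :: "'a::field set \<Rightarrow> nat \<Rightarrow> (nat \<Rightarrow> 'a) set" where
  "kvecs K m = {v. (\<forall>j. v j \<in> K) \<and> (\<forall>j\<ge>m. v j = 0)}"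

text \<open>\<open>\<bbbF>\<^sup>n\<close> with n = n_0 + ... + n_(l-1), in block form: c (i,j) is the j-th entry of block i.\<close>
definition Fvecs :: "nat \<Rightarrow> (nat \<Rightarrow> nat) \<Rightarrow> (nat \<times> nat \<Rightarrow> 'a::field) set" where
  "Fvecs l n = {c. \<forall>i j. \<not> (i < l \<and> j < n i) \<longrightarrow> c (i, j) = 0}"

definition field_basis :: "'a::field set \<Rightarrow> 'a list \<Rightarrow> bool" where
  "field_basis K bs \<longleftrightarrow> (\<forall>x. \<exists>!a. (\<forall>t<length bs. a t \<in> K) \<and> (\<forall>t\<ge>length bs. a t = 0)
      \<and> x = (\<Sum>t<length bs. a t * bs ! t))"

definition coords :: "'a::field set \<Rightarrow> 'a list \<Rightarrow> 'a \<Rightarrow> nat \<Rightarrow> 'a" where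
  "coords K bs x = (THE a. (\<forall>t<length bs. a t \<in> K) \<and> (\<forall>t\<ge>length bs. a t = 0)
      \<and> x = (\<Sum>t<length bs. a t * bs ! t))"

text \<open>Row space over K of the matrix \<Gamma>(v) (rows indexed by basis elements t, columns by j < m).\<close>
definition rowspace_Gamma :: "'a::field set \<Rightarrow> 'a list \<Rightarrow> nat \<Rightarrow> (nat \<Rightarrow> 'a) \<Rightarrow> (nat \<Rightarrow> 'a) set" where
  "rowspace_Gamma K bs m v =
     kspan K {(\<lambda>j. if j < m then coords K bs (v j) t else 0) | t. t < length bs}"

text \<open>The product lattice of subspaces (components beyond l are fixed to zero).\<close>
definition Plat :: "nat \<Rightarrow> (nat \<Rightarrow> nat) \<Rightarrow> (nat \<Rightarrow> 'a::field set) \<Rightarrow> (nat \<Rightarrow> (nat \<Rightarrow> 'a) set) set" where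
  "Plat l n K = {L. (\<forall>i<l. ksubspace (K i) (L i) \<and> L i \<subseteq> kvecs (K i) (n i))
                    \<and> (\<forall>i\<ge>l. L i = {\<lambda>_. 0})}"

definition Rk :: "nat \<Rightarrow> (nat \<Rightarrow> 'a::field set) \<Rightarrow> (nat \<Rightarrow> (nat \<Rightarrow> 'a) set) \<Rightarrow> nat" where
  "Rk l K L = (\<Sum>i<l. kdim (K i) (L i))"

text \<open>V_L = codewords whose support is contained in L (componentwise).\<close>
definition VL :: "nat \<Rightarrow> (nat \<Rightarrow> nat) \<Rightarrow> (nat \<Rightarrow> 'a::field set) \<Rightarrow> (nat \<Rightarrow> 'a list)
                   \<Rightarrow> (nat \<Rightarrow> (nat \<Rightarrow> 'a) set) \<Rightarrow> (nat \<times> nat \<Rightarrow> 'a) set" where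
  "VL l n K \<beta> L = {c \<in> Fvecs l n. \<forall>i<l. rowspace_Gamma (K i) (\<beta> i) (n i) (\<lambda>j. c (i, j)) \<subseteq> L i}"

definition dual_code :: "nat \<Rightarrow> (nat \<Rightarrow> nat) \<Rightarrow> (nat \<times> nat \<Rightarrow> 'a::field) set \<Rightarrow> (nat \<times> nat \<Rightarrow> 'a) set" where
  "dual_code l n C = {x \<in> Fvecs l n. \<forall>c\<in>C. (\<Sum>i<l. \<Sum>j<n i. x (i, j) * c (i, j)) = 0}"

definition genmat :: "'a::field set \<Rightarrow> (nat \<Rightarrow> 'a) set \<Rightarrow> nat \<Rightarrow> nat \<Rightarrow> 'a" where
  "genmat K V = (SOME A. (\<forall>r<kdim K V. A r \<in> V) \<and> kspan K (A ` {..<kdim K V}) = V)"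

text \<open>\<Pi>_L(x) = x A^T, A = diag(A_1,...,A_l), result in \<bbbF>^N in block form.\<close>
definition PiL :: "nat \<Rightarrow> (nat \<Rightarrow> nat) \<Rightarrow> (nat \<Rightarrow> 'a::field set) \<Rightarrow> (nat \<Rightarrow> (nat \<Rightarrow> 'a) set)
                     \<Rightarrow> (nat \<times> nat \<Rightarrow> 'a) \<Rightarrow> (nat \<times> nat \<Rightarrow> 'a)" where
  "PiL l n K L x = (\<lambda>(i, r). if i < l \<and> r < kdim (K i) (L i)
       then (\<Sum>j<n i. x (i, j) * genmat (K i) (L i) r j) else 0)"

definition rhoC :: "nat \<Rightarrow> (nat \<Rightarrow> nat) \<Rightarrow> (nat \<Rightarrow> 'a::field set) \<Rightarrow> (nat \<times> nat \<Rightarrow> 'a) set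
                     \<Rightarrow> (nat \<Rightarrow> (nat \<Rightarrow> 'a) set) \<Rightarrow> nat" where
  "rhoC l n K C L = kdim (UNIV :: 'a set) (PiL l n K L ` dual_code l n C)"

definition nullityC :: "nat \<Rightarrow> (nat \<Rightarrow> nat) \<Rightarrow> (nat \<Rightarrow> 'a::field set) \<Rightarrow> (nat \<times> nat \<Rightarrow> 'a) set
                     \<Rightarrow> (nat \<Rightarrow> (nat \<Rightarrow> 'a) set) \<Rightarrow> nat" where
  "nullityC l n K C L = Rk l K L - rhoC l n K C L"

definition dS :: "nat \<Rightarrow> (nat \<Rightarrow> nat) \<Rightarrow> (nat \<Rightarrow> 'a::field set) \<Rightarrow> (nat \<times> nat \<Rightarrow> 'a) set \<Rightarrow> nat \<Rightarrow> nat" where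
  "dS l n K C i = Min {Rk l K L | L. L \<in> Plat l n K \<and> nullityC l n K C L = i}"

definition dSR :: "nat \<Rightarrow> (nat \<Rightarrow> nat) \<Rightarrow> (nat \<Rightarrow> 'a::field set) \<Rightarrow> (nat \<Rightarrow> 'a list)
                    \<Rightarrow> (nat \<times> nat \<Rightarrow> 'a) set \<Rightarrow> nat \<Rightarrow> nat" where
  "dSR l n K \<beta> C i = Min {Rk l K L | L. L \<in> Plat l n K \<and>
                                 kdim (UNIV :: 'a set) (C \<inter> VL l n K \<beta> L) \<ge> i}"

end

theory Submission
  imports Defs "HOL-Library.Function_Algebras" "HOL.Vector_Spaces" "HOL-Library.FuncSet"
begin

definition scl :: "'a::field \<Rightarrow> ('i \<Rightarrow> 'a) \<Rightarrow> ('i \<Rightarrow> 'a)" where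
  "scl c v = (\<lambda>x. c * v x)"

lemma scl_apply: "scl c v x = c * v x" by (simp add: scl_def)

interpretation fv: vector_space "scl :: 'a::field \<Rightarrow> ('i \<Rightarrow> 'a) \<Rightarrow> ('i \<Rightarrow> 'a)"
  by unfold_locales (auto simp: scl_def fun_eq_iff algebra_simps)

lemma fun_sum_apply: "(sum f A) x = (\<Sum>a\<in>A. f a x)"
  by (induct A rule: infinite_finite_induct) auto

lemma fun_diff_apply': "(f - g) x = f x - (g::'b \<Rightarrow> 'c::ab_group_add) x"
  by simp

definition FS :: "'i set \<Rightarrow> ('i \<Rightarrow> 'a::field) set" where
  "FS I = {x. \<forall>p. p \<notin> I \<longrightarrow> x p = 0}"

definition ip :: "'i set \<Rightarrow> ('i \<Rightarrow> 'a::field) \<Rightarrow> ('i \<Rightarrow> 'a) \<Rightarrow> 'a" where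
  "ip I x y = (\<Sum>p\<in>I. x p * y p)"

definition orth :: "'i set \<Rightarrow> ('i \<Rightarrow> 'a::field) set \<Rightarrow> ('i \<Rightarrow> 'a) set" where
  "orth I S = {x \<in> FS I. \<forall>w\<in>S. ip I x w = 0}"

definition lin :: "(('i \<Rightarrow> 'a::field) \<Rightarrow> ('j \<Rightarrow> 'a)) \<Rightarrow> bool" where
  "lin f \<longleftrightarrow> (\<forall>x y. f (x + y) = f x + f y) \<and> (\<forall>c x. f (scl c x) = scl c (f x))"

lemma finite_FS: "finite I \<Longrightarrow> finite (FS I :: ('i \<Rightarrow> 'a::{field,finite}) set)"
proof -
  assume "finite I"
  have "FS I = {f :: 'i \<Rightarrow> 'a. \<forall>x. (x \<in> I \<longrightarrow> f x \<in> UNIV) \<and> (x \<notin> I \<longrightarrow> f x = 0)}"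
    by (auto simp: FS_def)
  then show ?thesis using finite_set_of_finite_funs[OF \<open>finite I\<close> finite_UNIV, of 0] by simp
qed

lemma subspace_FS: "fv.subspace (FS I)"
  by (auto simp: fv.subspace_def FS_def scl_apply)

lemma card_field_ge2: "2 \<le> card (UNIV :: 'a::{field,finite} set)"
proof -
  have "{0::'a, 1} \<subseteq> UNIV" by simp
  then have "card {0::'a,1} \<le> card (UNIV :: 'a set)" by (rule card_mono[OF finite_UNIV])
  then show ?thesis by simp
qed

lemma finite_span:
  fixes B :: "('i \<Rightarrow> 'a::{field,finite}) set"
  assumes "finite B" shows "finite (fv.span B)"
proof -
  have "fv.span B = (\<lambda>u. \<Sum>v\<in>B. scl (u v) v) ` (B \<rightarrow>\<^sub>E UNIV)"
    unfolding fv.span_finite[OF assms]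
  proof (auto)
    fix u :: "('i \<Rightarrow> 'a) \<Rightarrow> 'a"
    show "(\<Sum>v\<in>B. scl (u v) v) \<in> (\<lambda>u. \<Sum>v\<in>B. scl (u v) v) ` (B \<rightarrow>\<^sub>E UNIV)"
      by (intro image_eqI[of _ _ "restrict u B"]) auto
  qed
  then show ?thesis using assms by (simp add: finite_PiE)
qed

lemma card_span_indep:
  fixes B :: "('i \<Rightarrow> 'a::{field,finite}) set"
  assumes "finite B" "fv.independent B"
  shows "card (fv.span B) = card (UNIV :: 'a set) ^ card B"
  using assms
proof (induct B rule: finite_induct)
  case empty
  then show ?case by simp
next
  case (insert b B)
  have indB: "fv.independent B" using insert.prems fv.independent_mono by blast
  have nb: "b \<notin> fv.span B"
    using insert.prems insert.hyps(2) fv.independent_insert by metis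
  let ?g = "\<lambda>(c::'a, v). scl c b + v"
  have eq: "fv.span (insert b B) = ?g ` (UNIV \<times> fv.span B)"
  proof
    show "fv.span (insert b B) \<subseteq> ?g ` (UNIV \<times> fv.span B)"
    proof
      fix x assume "x \<in> fv.span (insert b B)"
      then obtain c where "x - scl c b \<in> fv.span B" unfolding fv.span_insert by auto
      then show "x \<in> ?g ` (UNIV \<times> fv.span B)"
        by (intro image_eqI[of _ _ "(c, x - scl c b)"]) auto
    qed
  next
    show "?g ` (UNIV \<times> fv.span B) \<subseteq> fv.span (insert b B)"
    proof clarify
      fix c v assume "v \<in> fv.span B"
      then have "v \<in> fv.span (insert b B)" using fv.span_mono[of B "insert b B"] by blast
      moreover have "scl c b \<in> fv.span (insert b B)" by (intro fv.span_scale fv.span_base) simp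
      ultimately show "scl c b + v \<in> fv.span (insert b B)" by (intro fv.span_add)
    qed
  qed
  have inj: "inj_on ?g (UNIV \<times> fv.span B)"
  proof (rule inj_onI, clarsimp)
    fix c v c' v'
    assume v: "v \<in> fv.span B" and v': "v' \<in> fv.span B" and e: "scl c b + v = scl c' b + v'"
    have "scl (c - c') b = v' - v"
      using e by (auto simp: fun_eq_iff algebra_simps dest: fun_cong)
    then have "scl (c - c') b \<in> fv.span B" using fv.span_diff[OF v' v] by simp
    then have "c = c'"
    proof (cases "c = c'")
      case False
      assume h: "scl (c - c') b \<in> fv.span B"
      have "scl (inverse (c - c')) (scl (c - c') b) \<in> fv.span B" using fv.span_scale[OF h] .
      moreover have "scl (inverse (c - c')) (scl (c - c') b) = b"
        using False by (simp add: fun_eq_iff)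
      ultimately show ?thesis using nb by simp
    qed
    then show "c = c' \<and> v = v'" using e by simp
  qed
  have fin: "finite (fv.span B)" by (rule finite_span[OF insert.hyps(1)])
  show ?case
    unfolding eq card_image[OF inj] card_cartesian_product
    using insert by (simp add: insert.hyps(3)[OF indB] card_insert_if)
qed


lemma card_subspace:
  fixes S :: "('i \<Rightarrow> 'a::{field,finite}) set"
  assumes "fv.subspace S" "finite S"
  shows "card S = card (UNIV :: 'a set) ^ fv.dim S"
proof -
  obtain B where B: "B \<subseteq> S" "fv.independent B" "S \<subseteq> fv.span B" "card B = fv.dim S"
    by (rule fv.basis_exists)
  have "fv.span B = S" using fv.span_subspace[OF B(1) B(3) assms(1)] .
  moreover have "finite B" using B(1) assms(2) finite_subset by blast
  ultimately show ?thesis using card_span_indep[OF _ B(2)] B(4) by auto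
qed

lemma dim_le_of_subset:
  fixes S T :: "('i \<Rightarrow> 'a::{field,finite}) set"
  assumes "fv.subspace S" "fv.subspace T" "finite T" "S \<subseteq> T"
  shows "fv.dim S \<le> fv.dim T"
proof -
  have fS: "finite S" using assms finite_subset by blast
  have "card S \<le> card T" using assms card_mono by blast
  then have "card (UNIV :: 'a set) ^ fv.dim S \<le> card (UNIV :: 'a set) ^ fv.dim T"
    using card_subspace[OF assms(1) fS] card_subspace[OF assms(2,3)] by simp
  moreover have "1 < card (UNIV :: 'a set)" using card_field_ge2[where 'a='a] by simp
  ultimately show ?thesis by simp
qed

lemma eq_of_dim_eq:
  fixes S T :: "('i \<Rightarrow> 'a::{field,finite}) set"
  assumes "fv.subspace S" "fv.subspace T" "finite T" "S \<subseteq> T" "fv.dim S = fv.dim T"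
  shows "S = T"
proof -
  have fS: "finite S" using assms finite_subset by blast
  have "card S = card T"
    using card_subspace[OF assms(1) fS] card_subspace[OF assms(2,3)] assms(5) by simp
  then show ?thesis using assms(3,4) card_subset_eq by blast
qed

lemma dim_sub_le:
  fixes S T :: "('i \<Rightarrow> 'a::{field,finite}) set"
  assumes "fv.subspace T" "finite T" "S \<subseteq> T"
  shows "fv.dim S \<le> fv.dim T"
proof -
  have "fv.span S \<subseteq> T" using fv.span_minimal[OF assms(3,1)] .
  then show ?thesis using dim_le_of_subset[OF fv.subspace_span assms(1,2)] fv.dim_span by metis
qed

lemma dim_zero_sub:
  fixes S :: "('i \<Rightarrow> 'a::field) set"
  assumes "S \<subseteq> {0}" shows "fv.dim S = 0"
proof -
  have "S \<subseteq> fv.span {}" using assms by simp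
  then show ?thesis using fv.dim_le_card[of S "{}"] by simp
qed

lemma dim_pos_ex:
  fixes S :: "('i \<Rightarrow> 'a::field) set"
  assumes "fv.dim S > 0" shows "\<exists>x\<in>S. x \<noteq> 0"
  using dim_zero_sub[of S] assms by auto

lemma lin_zero: "lin f \<Longrightarrow> f 0 = 0"
  unfolding lin_def by (metis add_cancel_right_right add_0)

lemma lin_diff: "lin f \<Longrightarrow> f (x - y) = f x - f y"
  unfolding lin_def by (metis add_diff_cancel diff_add_cancel eq_diff_eq)

lemma lin_image_subspace:
  assumes "lin f" "fv.subspace S" shows "fv.subspace (f ` S)"
  unfolding fv.subspace_def
proof (intro conjI ballI allI)
  show "0 \<in> f ` S" using lin_zero[OF assms(1)] fv.subspace_0[OF assms(2)] by force
next
  fix x y assume "x \<in> f ` S" "y \<in> f ` S"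
  then obtain a b where "a \<in> S" "b \<in> S" "x = f a" "y = f b" by auto
  moreover have "f (a + b) = f a + f b" using assms(1) unfolding lin_def by blast
  moreover have "a + b \<in> S" using fv.subspace_add[OF assms(2)] \<open>a \<in> S\<close> \<open>b \<in> S\<close> by blast
  ultimately show "x + y \<in> f ` S" by (metis image_eqI)
next
  fix c x assume "x \<in> f ` S"
  then obtain a where "a \<in> S" "x = f a" by auto
  moreover have "f (scl c a) = scl c (f a)" using assms(1) unfolding lin_def by blast
  moreover have "scl c a \<in> S" using fv.subspace_scale[OF assms(2)] \<open>a \<in> S\<close> by blast
  ultimately show "scl c x \<in> f ` S" by (metis image_eqI)
qed

lemma lin_kernel_subspace:
  assumes "lin f" "fv.subspace S" shows "fv.subspace {x \<in> S. f x = 0}"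
  using assms lin_zero[OF assms(1)] unfolding fv.subspace_def lin_def
  by (auto simp: scl_def fun_eq_iff)

lemma rank_nullity:
  fixes S :: "('i \<Rightarrow> 'a::{field,finite}) set" and f :: "('i \<Rightarrow> 'a) \<Rightarrow> ('j \<Rightarrow> 'a)"
  assumes "lin f" "fv.subspace S" "finite S"
  shows "fv.dim S = fv.dim {x \<in> S. f x = 0} + fv.dim (f ` S)"
proof -
  let ?Z = "{x \<in> S. f x = 0}"
  have fib: "card {x \<in> S. f x = y} = card ?Z" if "y \<in> f ` S" for y
  proof -
    obtain x0 where x0: "x0 \<in> S" "y = f x0" using \<open>y \<in> f ` S\<close> by auto
    have "{x \<in> S. f x = y} = (\<lambda>z. z + x0) ` ?Z"
    proof
      show "{x \<in> S. f x = y} \<subseteq> (\<lambda>z. z + x0) ` ?Z"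
      proof
        fix x assume "x \<in> {x \<in> S. f x = y}"
        then have "x - x0 \<in> ?Z" using x0 lin_diff[OF assms(1)] fv.subspace_diff[OF assms(2)] by auto
        then show "x \<in> (\<lambda>z. z + x0) ` ?Z" by (intro image_eqI[of _ _ "x - x0"]) auto
      qed
    next
      show "(\<lambda>z. z + x0) ` ?Z \<subseteq> {x \<in> S. f x = y}"
        using x0 assms(1,2) unfolding lin_def by (auto intro: fv.subspace_add)
    qed
    moreover have "inj_on (\<lambda>z. z + x0) ?Z" by (auto intro: inj_onI)
    ultimately show ?thesis by (simp add: card_image)
  qed
  have "S = (\<Union>y\<in>f ` S. {x \<in> S. f x = y})" by auto
  then have "card S = (\<Sum>y\<in>f ` S. card {x \<in> S. f x = y})"
    using assms(3) by (subst card_UN_disjoint[symmetric]) auto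
  also have "\<dots> = card (f ` S) * card ?Z" using fib by simp
  finally have cS: "card S = card (f ` S) * card ?Z" .
  have sZ: "fv.subspace ?Z" by (rule lin_kernel_subspace[OF assms(1,2)])
  have sI: "fv.subspace (f ` S)" by (rule lin_image_subspace[OF assms(1,2)])
  have fZ: "finite ?Z" using assms(3) by simp
  have fI: "finite (f ` S)" using assms(3) by simp
  have "card (UNIV :: 'a set) ^ fv.dim S = card (UNIV :: 'a set) ^ (fv.dim ?Z + fv.dim (f ` S))"
    using cS card_subspace[OF assms(2,3)] card_subspace[OF sZ fZ] card_subspace[OF sI fI]
    by (simp add: power_add)
  moreover have "1 < card (UNIV :: 'a set)" using card_field_ge2[where 'a='a] by simp
  ultimately show ?thesis by simp
qed

definition ev :: "'i \<Rightarrow> 'i \<Rightarrow> 'a::field" where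
  "ev p = (\<lambda>x. if x = p then 1 else 0)"

lemma dim_FS:
  fixes I :: "'i set"
  assumes "finite I"
  shows "fv.dim (FS I :: ('i \<Rightarrow> 'a::field) set) = card I"
proof -
  let ?B = "ev ` I :: ('i \<Rightarrow> 'a) set"
  have inj: "inj_on (ev :: 'i \<Rightarrow> 'i \<Rightarrow> 'a) I" by (auto intro!: inj_onI simp: ev_def fun_eq_iff split: if_splits)
  have sub: "?B \<subseteq> FS I" by (auto simp: FS_def ev_def)
  have span: "FS I \<subseteq> fv.span ?B"
  proof
    fix x :: "'i \<Rightarrow> 'a" assume x: "x \<in> FS I"
    have "x = (\<Sum>p\<in>I. scl (x p) (ev p))"
    proof
      fix q
      have "(\<Sum>p\<in>I. scl (x p) (ev p)) q = (\<Sum>p\<in>I. (if q = p then x p else 0))"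
        by (auto simp: fun_sum_apply scl_apply ev_def intro!: sum.cong)
      also have "\<dots> = x q" using x assms by (auto simp: sum.delta FS_def)
      finally show "x q = (\<Sum>p\<in>I. scl (x p) (ev p)) q" by simp
    qed
    also have "\<dots> \<in> fv.span ?B" by (intro fv.span_sum fv.span_scale fv.span_base) auto
    finally show "x \<in> fv.span ?B" .
  qed
  have ind: "fv.independent ?B"
  proof -
    have "\<not> fv.dependent ?B"
    proof
      assume "fv.dependent ?B"
      then obtain u where u: "\<exists>v\<in>?B. u v \<noteq> 0" "(\<Sum>v\<in>?B. scl (u v) v) = 0"
        using fv.dependent_finite[of ?B] assms by auto
      then obtain p where p: "p \<in> I" "u (ev p) \<noteq> 0" by auto
      have "(\<Sum>v\<in>?B. scl (u v) v) p = (\<Sum>q\<in>I. scl (u (ev q)) (ev q)) p"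
        by (simp add: sum.reindex[OF inj])
      also have "\<dots> = (\<Sum>q\<in>I. (if p = q then u (ev q) else 0))"
        by (auto simp: fun_sum_apply scl_apply ev_def intro!: sum.cong)
      also have "\<dots> = u (ev p)" using p assms by (simp add: sum.delta)
      finally show False using u(2) p(2) by simp
    qed
    then show ?thesis by simp
  qed
  have "card ?B = fv.dim (FS I :: ('i \<Rightarrow> 'a) set)" using fv.basis_card_eq_dim[OF sub span ind] by simp
  then show ?thesis using card_image[OF inj] by simp
qed


lemma ip_sym: "ip I x y = ip I y x"
  by (simp add: ip_def mult.commute)

lemma ip_add2: "ip I x (y + z) = ip I x y + ip I x z"
  by (simp add: ip_def algebra_simps sum.distrib)

lemma ip_add1: "ip I (y + z) x = ip I y x + ip I z x"
  by (simp add: ip_def algebra_simps sum.distrib)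

lemma ip_scl2: "ip I x (scl c y) = c * ip I x y"
  by (simp add: ip_def scl_apply sum_distrib_left algebra_simps)

lemma ip_scl1: "ip I (scl c y) x = c * ip I y x"
  by (simp add: ip_def scl_apply sum_distrib_left algebra_simps)

lemma ip_zero2: "ip I x 0 = 0"
  by (simp add: ip_def)

lemma orth_sub_FS: "orth I S \<subseteq> FS I"
  by (auto simp: orth_def)

lemma subspace_orth: "fv.subspace (orth I S)"
  unfolding fv.subspace_def orth_def
  using subspace_FS[of I] unfolding fv.subspace_def
  by (auto simp: ip_add1 ip_scl1 ip_sym[of I 0] ip_zero2)

lemma orth_antimono_span:
  assumes "U \<subseteq> fv.span E" shows "orth I E \<subseteq> orth I U"
proof
  fix x assume x: "x \<in> orth I E"
  have sub: "fv.subspace {w. ip I x w = 0}"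
    unfolding fv.subspace_def by (auto simp: ip_add2 ip_scl2 ip_zero2)
  have "E \<subseteq> {w. ip I x w = 0}" using x by (auto simp: orth_def)
  then have "fv.span E \<subseteq> {w. ip I x w = 0}" using fv.span_minimal[OF _ sub] by blast
  then show "x \<in> orth I U" using x assms by (auto simp: orth_def)
qed

lemma orth_LB:
  fixes I :: "'i set" and E :: "('i \<Rightarrow> 'a::{field,finite}) set"
  assumes "finite I" "finite E"
  shows "card I \<le> fv.dim (orth I E) + card E"
proof -
  define \<phi> where "\<phi> x = (\<lambda>w. if w \<in> E then ip I x w else 0)" for x :: "'i \<Rightarrow> 'a"
  have lin: "lin \<phi>"
    unfolding lin_def \<phi>_def by (auto simp: fun_eq_iff ip_add1 ip_scl1 scl_apply)
  have "fv.dim (FS I :: ('i \<Rightarrow> 'a) set) = fv.dim {x \<in> FS I. \<phi> x = 0} + fv.dim (\<phi> ` FS I)"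
    by (rule rank_nullity[OF lin subspace_FS finite_FS[OF assms(1)]])
  moreover have "{x \<in> FS I. \<phi> x = 0} = orth I E"
    by (auto simp: orth_def \<phi>_def fun_eq_iff)
  moreover have "fv.dim (\<phi> ` FS I) \<le> card E"
  proof -
    have "\<phi> ` FS I \<subseteq> FS E" by (auto simp: \<phi>_def FS_def)
    then have "fv.dim (\<phi> ` FS I) \<le> fv.dim (FS E :: (('i \<Rightarrow> 'a) \<Rightarrow> 'a) set)"
      by (rule dim_sub_le[OF subspace_FS finite_FS[OF assms(2)]])
    then show ?thesis using dim_FS[OF assms(2), where 'a='a] by simp
  qed
  ultimately show ?thesis using dim_FS[OF assms(1), where 'a='a] by simp
qed

lemma orth_dim:
  fixes I :: "'i set" and W :: "('i \<Rightarrow> 'a::{field,finite}) set"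
  assumes "finite I" "W \<subseteq> FS I" "fv.subspace W"
  shows "fv.dim (orth I W) + fv.dim W = card I"
proof -
  have fW: "finite W" using finite_subset[OF assms(2) finite_FS[OF assms(1)]] .
  obtain B where B: "B \<subseteq> W" "fv.independent B" "W \<subseteq> fv.span B" "card B = fv.dim W"
    by (rule fv.basis_exists)
  have fB: "finite B" using B(1) fW finite_subset by blast
  have oW: "orth I W = orth I B"
    using orth_antimono_span[OF B(3)] B(1) by (auto simp: orth_def)
  define \<phi> where "\<phi> x = (\<lambda>w. if w \<in> B then ip I x w else 0)" for x :: "'i \<Rightarrow> 'a"
  have lin: "lin \<phi>"
    unfolding lin_def \<phi>_def by (auto simp: fun_eq_iff ip_add1 ip_scl1 scl_apply)
  have rn: "fv.dim (FS I :: ('i \<Rightarrow> 'a) set) = fv.dim {x \<in> FS I. \<phi> x = 0} + fv.dim (\<phi> ` FS I)"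
    by (rule rank_nullity[OF lin subspace_FS finite_FS[OF assms(1)]])
  have ker: "{x \<in> FS I. \<phi> x = 0} = orth I B"
    by (auto simp: orth_def \<phi>_def fun_eq_iff)
  let ?U = "\<phi> ` FS I"
  have UFS: "?U \<subseteq> FS B" by (auto simp: \<phi>_def FS_def)
  have sU: "fv.subspace ?U" by (rule lin_image_subspace[OF lin subspace_FS])
  have dU: "fv.dim ?U \<le> card B"
    using dim_sub_le[OF subspace_FS finite_FS[OF fB] UFS] dim_FS[OF fB, where 'a='a] by simp
  have "fv.dim ?U \<ge> card B"
  proof (rule ccontr)
    assume "\<not> card B \<le> fv.dim ?U"
    then have lt: "fv.dim ?U < card B" by simp
    obtain E where E: "E \<subseteq> ?U" "fv.independent E" "?U \<subseteq> fv.span E" "card E = fv.dim ?U"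
      by (rule fv.basis_exists)
    have fE: "finite E" using finite_subset[OF subset_trans[OF E(1) UFS] finite_FS[OF fB]] .
    have "card B \<le> fv.dim (orth B E) + card E" by (rule orth_LB[OF fB fE])
    then have "fv.dim (orth B E) > 0" using E(4) lt by simp
    then obtain a where a: "a \<in> orth B E" "a \<noteq> 0" using dim_pos_ex by blast
    have aU: "a \<in> orth B ?U" using a(1) orth_antimono_span[OF E(3)] by blast
    define s where "s = (\<Sum>w\<in>B. scl (a w) w)"
    have s0: "s = 0"
    proof
      fix p
      show "s p = 0 p"
      proof (cases "p \<in> I")
        case True
        have evp: "ev p \<in> FS I" using True by (auto simp: FS_def ev_def)
        have "ip B a (\<phi> (ev p)) = 0" using aU evp by (auto simp: orth_def)
        moreover have "ip B a (\<phi> (ev p)) = (\<Sum>w\<in>B. a w * ip I (ev p) w)"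
          by (simp add: ip_def \<phi>_def)
        moreover have "ip I (ev p) w = w p" for w :: "'i \<Rightarrow> 'a"
        proof -
          have "ip I (ev p) w = (\<Sum>q\<in>I. if p = q then w q else 0)"
            by (auto simp: ip_def ev_def intro!: sum.cong)
          then show ?thesis using True assms(1) by (simp add: sum.delta)
        qed
        ultimately show ?thesis by (simp add: s_def fun_sum_apply scl_apply)
      next
        case False
        have "w p = 0" if "w \<in> B" for w using that B(1) assms(2) False by (auto simp: FS_def)
        then show ?thesis by (simp add: s_def fun_sum_apply scl_apply sum.neutral)
      qed
    qed
    have "a w = 0" if "w \<in> B" for w
    proof (rule ccontr)
      assume "a w \<noteq> 0"
      then have "fv.dependent B" unfolding fv.dependent_finite[OF fB]
        using s0 that unfolding s_def by blast
      with B(2) show False by simp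
    qed
    moreover have "a w = 0" if "w \<notin> B" for w using a(1) that by (auto simp: orth_def FS_def)
    ultimately show False using a(2) by (auto simp: fun_eq_iff)
  qed
  then have "fv.dim ?U = fv.dim W" using dU B(4) by simp
  then show ?thesis using rn ker oW dim_FS[OF assms(1), where 'a='a] by simp
qed

lemma orth_orth:
  fixes I :: "'i set" and W :: "('i \<Rightarrow> 'a::{field,finite}) set"
  assumes "finite I" "W \<subseteq> FS I" "fv.subspace W"
  shows "orth I (orth I W) = W"
proof -
  have "W \<subseteq> orth I (orth I W)" using assms(2) by (auto simp: orth_def ip_sym)
  moreover have "fv.dim W = fv.dim (orth I (orth I W))"
    using orth_dim[OF assms] orth_dim[OF assms(1) orth_sub_FS subspace_orth, of W] by simp
  moreover have "finite (orth I (orth I W))"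
    using finite_subset[OF orth_sub_FS finite_FS[OF assms(1)]] .
  ultimately show ?thesis
    using eq_of_dim_eq[OF assms(3) subspace_orth] by blast
qed


lemma subfield_sum:
  assumes "subfield K" "\<And>x. x \<in> T \<Longrightarrow> f x \<in> K"
  shows "sum f T \<in> K"
  using assms(2)
proof (induct T rule: infinite_finite_induct)
  case (infinite A) then show ?case using assms(1) by (simp add: subfield_def)
next
  case empty then show ?case using assms(1) by (simp add: subfield_def)
next
  case (insert x F) then show ?case using assms(1) by (simp add: subfield_def)
qed

lemma subfield_mult: "subfield K \<Longrightarrow> x \<in> K \<Longrightarrow> y \<in> K \<Longrightarrow> x * y \<in> K"
  by (simp add: subfield_def)

lemma subfield_inv: "subfield K \<Longrightarrow> x \<in> K \<Longrightarrow> inverse x \<in> K"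
  by (simp add: subfield_def)

lemma subfield_1: "subfield K \<Longrightarrow> 1 \<in> K"
  by (simp add: subfield_def)

lemma kspan_sub:
  assumes "ksubspace K V" "S \<subseteq> V"
  shows "kspan K S \<subseteq> V"
proof
  fix v assume "v \<in> kspan K S"
  then obtain T a where T: "finite T" "T \<subseteq> S" "\<forall>u\<in>T. a u \<in> K" "v = (\<lambda>x. \<Sum>u\<in>T. a u * u x)"
    by (auto simp: kspan_def)
  have "(\<lambda>x. \<Sum>u\<in>T. a u * u x) \<in> V" using T(1,2,3)
  proof (induct T rule: finite_induct)
    case empty then show ?case using assms(1) by (simp add: ksubspace_def)
  next
    case (insert u F)
    have "(\<lambda>x. a u * u x) \<in> V" using insert assms by (auto simp: ksubspace_def)
    moreover have "(\<lambda>x. \<Sum>u\<in>F. a u * u x) \<in> V" using insert by auto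
    moreover have add: "\<And>p q. p \<in> V \<Longrightarrow> q \<in> V \<Longrightarrow> (\<lambda>x. p x + q x) \<in> V"
      using assms(1) by (simp add: ksubspace_def)
    ultimately have "(\<lambda>x. a u * u x + (\<Sum>u\<in>F. a u * u x)) \<in> V"
      by (metis (no_types) add)
    then show ?case using insert by simp
  qed
  then show "v \<in> V" using T by simp
qed

lemma kspan_sub_span: "kspan K S \<subseteq> fv.span S"
proof
  fix v assume "v \<in> kspan K S"
  then obtain T a where T: "finite T" "T \<subseteq> S" "v = (\<lambda>x. \<Sum>u\<in>T. a u * u x)"
    by (auto simp: kspan_def)
  have "v = (\<Sum>u\<in>T. scl (a u) u)" using T by (auto simp: fun_eq_iff fun_sum_apply scl_apply)
  also have "\<dots> \<in> fv.span S" using T by (intro fv.span_sum fv.span_scale fv.span_base) auto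
  finally show "v \<in> fv.span S" .
qed

lemma kspan_base: "subfield K \<Longrightarrow> u \<in> S \<Longrightarrow> u \<in> kspan K S"
  unfolding kspan_def
  by (rule CollectI, rule exI[of _ "{u}"], rule exI[of _ "\<lambda>_. 1"]) (auto simp: subfield_def)

lemma kdim_eqI:
  fixes V :: "('i \<Rightarrow> 'a::field) set"
  assumes "finite B" "B \<subseteq> V" "kspan K B = V" "card B = fv.dim V"
  shows "kdim K V = fv.dim V"
  unfolding kdim_def
proof (rule Least_equality)
  show "\<exists>B. finite B \<and> card B = fv.dim V \<and> B \<subseteq> V \<and> kspan K B = V" using assms by blast
next
  fix d assume "\<exists>B. finite B \<and> card B = d \<and> B \<subseteq> V \<and> kspan K B = V"
  then obtain B' where "finite B'" "card B' = d" "kspan K B' = V" by blast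
  then show "fv.dim V \<le> d" using kspan_sub_span[of K B'] fv.dim_le_card[of V B'] by auto
qed

lemma kspan_UNIV: "kspan UNIV S = fv.span S"
proof
  show "kspan UNIV S \<subseteq> fv.span S" by (rule kspan_sub_span)
next
  show "fv.span S \<subseteq> kspan UNIV S"
  proof
    fix v assume "v \<in> fv.span S"
    then obtain T r where "finite T" "T \<subseteq> S" "v = (\<Sum>a\<in>T. scl (r a) a)"
      unfolding fv.span_explicit by blast
    then show "v \<in> kspan UNIV S" unfolding kspan_def
      by (auto simp: fun_eq_iff fun_sum_apply scl_apply intro!: exI[of _ T] exI[of _ r])
  qed
qed

lemma kdim_UNIV:
  fixes V :: "('i \<Rightarrow> 'a::{field,finite}) set"
  assumes "fv.subspace V" "finite V"
  shows "kdim UNIV V = fv.dim V"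
proof -
  obtain B where B: "B \<subseteq> V" "fv.independent B" "V \<subseteq> fv.span B" "card B = fv.dim V"
    by (rule fv.basis_exists)
  have "fv.span B = V" using fv.span_subspace[OF B(1) B(3) assms(1)] .
  moreover have "finite B" using finite_subset[OF B(1) assms(2)] .
  moreover have "kspan UNIV B = V" using kspan_UNIV[of B] \<open>fv.span B = V\<close> by simp
  ultimately show ?thesis using kdim_eqI[of B V UNIV] B(1,4) by simp
qed

lemma ksubspace_UNIV: "ksubspace UNIV V \<longleftrightarrow> fv.subspace V"
  by (auto simp: ksubspace_def fv.subspace_def scl_def zero_fun_def plus_fun_def)


lemma coords_spec:
  assumes "field_basis K bs"
  shows "(\<forall>t<length bs. coords K bs x t \<in> K) \<and> (\<forall>t\<ge>length bs. coords K bs x t = 0)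
      \<and> x = (\<Sum>t<length bs. coords K bs x t * bs ! t)"
proof -
  from assms have "\<exists>!a. (\<forall>t<length bs. a t \<in> K) \<and> (\<forall>t\<ge>length bs. a t = 0)
      \<and> x = (\<Sum>t<length bs. a t * bs ! t)" unfolding field_basis_def by blast
  then show ?thesis unfolding coords_def by (rule theI')
qed

lemma coords_unique:
  assumes "field_basis K bs" "\<forall>t<length bs. a t \<in> K" "\<forall>t\<ge>length bs. a t = 0"
     "x = (\<Sum>t<length bs. a t * bs ! t)"
  shows "coords K bs x = a"
  unfolding coords_def
  by (rule the1_equality) (use assms in \<open>auto simp: field_basis_def\<close>)

lemma coords_lin:
  assumes K: "subfield K" and fb: "field_basis K bs" and "finite T" and c: "\<forall>w\<in>T. c w \<in> K"
  shows "coords K bs (\<Sum>w\<in>T. c w * g w) = (\<lambda>t. \<Sum>w\<in>T. c w * coords K bs (g w) t)"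
proof (rule coords_unique[OF fb])
  show "\<forall>t<length bs. (\<Sum>w\<in>T. c w * coords K bs (g w) t) \<in> K"
    using coords_spec[OF fb] c by (auto intro!: subfield_sum[OF K] subfield_mult[OF K])
  show "\<forall>t\<ge>length bs. (\<Sum>w\<in>T. c w * coords K bs (g w) t) = 0"
    using coords_spec[OF fb] by auto
  have "(\<Sum>w\<in>T. c w * g w) = (\<Sum>w\<in>T. c w * (\<Sum>t<length bs. coords K bs (g w) t * bs ! t))"
  proof -
    have gw: "\<And>w. g w = (\<Sum>t<length bs. coords K bs (g w) t * bs ! t)"
      using coords_spec[OF fb] by blast
    show ?thesis by (simp only: gw[symmetric])
  qed
  also have "\<dots> = (\<Sum>t<length bs. (\<Sum>w\<in>T. c w * coords K bs (g w) t) * bs ! t)"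
    by (simp add: sum_distrib_left sum_distrib_right mult.assoc sum.swap[of _ T])
  finally show "(\<Sum>w\<in>T. c w * g w) = (\<Sum>t<length bs. (\<Sum>w\<in>T. c w * coords K bs (g w) t) * bs ! t)" .
qed

lemma coords_scal:
  assumes K: "subfield K" and fb: "field_basis K bs" and c: "c \<in> K"
  shows "coords K bs (c * x) = (\<lambda>t. c * coords K bs x t)"
  using coords_lin[OF K fb, of "{0::nat}" "\<lambda>_. c" "\<lambda>_. x"] c by simp

lemma coeffK:
  assumes K: "subfield K" and fb: "field_basis K bs"
    and B: "\<forall>b\<in>B. \<forall>j. b j \<in> K" and w: "\<forall>j. w j \<in> K" and ws: "w \<in> fv.span B"
  shows "w \<in> kspan K B"
proof -
  obtain T r where T: "finite T" "T \<subseteq> B" "w = (\<Sum>a\<in>T. scl (r a) a)"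
    using ws unfolding fv.span_explicit by blast
  have wj: "w j = (\<Sum>a\<in>T. a j * r a)" for j using T(3) by (simp add: fun_sum_apply scl_apply mult.commute)
  define c1 where "c1 = coords K bs 1"
  have "\<exists>t0<length bs. c1 t0 \<noteq> 0"
  proof (rule ccontr)
    assume "\<not> ?thesis"
    then have "(\<Sum>t<length bs. c1 t * bs ! t) = 0" by simp
    then show False using coords_spec[OF fb, of 1] by (simp add: c1_def)
  qed
  then obtain t0 where t0: "t0 < length bs" "c1 t0 \<noteq> 0" by blast
  have c1K: "c1 t0 \<in> K" using coords_spec[OF fb, of 1] t0 by (simp add: c1_def)
  have eq: "w j * c1 t0 = (\<Sum>a\<in>T. a j * coords K bs (r a) t0)" for j
  proof -
    have "coords K bs (w j) = (\<lambda>t. \<Sum>a\<in>T. a j * coords K bs (r a) t)"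
      unfolding wj by (rule coords_lin[OF K fb T(1)]) (use B T(2) in auto)
    moreover have "coords K bs (w j * 1) = (\<lambda>t. w j * c1 t)"
      unfolding c1_def by (rule coords_scal[OF K fb w[rule_format]])
    ultimately show ?thesis by (metis mult.right_neutral)
  qed
  define coef where "coef a = coords K bs (r a) t0 * inverse (c1 t0)" for a
  have "w = (\<lambda>x. \<Sum>a\<in>T. coef a * a x)"
  proof
    fix j
    have "w j = (w j * c1 t0) * inverse (c1 t0)" using t0(2) by simp
    also have "\<dots> = (\<Sum>a\<in>T. coef a * a j)"
      unfolding eq coef_def by (simp add: sum_distrib_left mult.left_commute mult.commute)
    finally show "w j = (\<Sum>a\<in>T. coef a * a j)" .
  qed
  moreover have "\<forall>a\<in>T. coef a \<in> K"
    using coords_spec[OF fb] t0 c1K unfolding coef_def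
    by (auto intro!: subfield_mult[OF K] subfield_inv[OF K])
  ultimately show ?thesis unfolding kspan_def using T(1,2) by blast
qed

lemma kvecs_sub_FS: "kvecs K m \<subseteq> FS {..<m}"
  by (auto simp: kvecs_def FS_def)

lemma kdim_K:
  fixes W :: "(nat \<Rightarrow> 'a::{field,finite}) set"
  assumes K: "subfield K" and fb: "field_basis K bs" and W: "ksubspace K W" "W \<subseteq> kvecs K m"
  shows "kdim K W = fv.dim W"
proof -
  have fW: "finite W" using finite_subset[OF subset_trans[OF W(2) kvecs_sub_FS] finite_FS] by blast
  obtain B where B: "B \<subseteq> W" "fv.independent B" "W \<subseteq> fv.span B" "card B = fv.dim W"
    by (rule fv.basis_exists)
  have "kspan K B = W"
  proof
    show "kspan K B \<subseteq> W" by (rule kspan_sub[OF W(1) B(1)])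
  next
    show "W \<subseteq> kspan K B"
    proof
      fix w assume "w \<in> W"
      then show "w \<in> kspan K B"
        using coeffK[OF K fb, of B w] B(1,3) W(2) by (auto simp: kvecs_def)
    qed
  qed
  moreover have "finite B" using finite_subset[OF B(1) fW] .
  ultimately show ?thesis using kdim_eqI[of B W K] B(1,4) by simp
qed


definition blk :: "(nat \<times> nat \<Rightarrow> 'a) \<Rightarrow> nat \<Rightarrow> nat \<Rightarrow> 'a" where
  "blk c i = (\<lambda>j. c (i, j))"

definition Iset :: "nat \<Rightarrow> (nat \<Rightarrow> nat) \<Rightarrow> (nat \<times> nat) set" where
  "Iset l n = Sigma {..<l} (\<lambda>i. {..<n i})"

lemma finite_Iset: "finite (Iset l n)" by (simp add: Iset_def)

lemma Fvecs_FS: "Fvecs l n = FS (Iset l n)"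
  by (auto simp: Fvecs_def FS_def Iset_def)

lemma blk_add: "blk (x + y) i = blk x i + blk y i" by (simp add: blk_def fun_eq_iff)
lemma blk_scl: "blk (scl c x) i = scl c (blk x i)" by (simp add: blk_def fun_eq_iff scl_apply)
lemma blk_diff: "blk (x - y) i = blk x i - blk y i" by (simp add: blk_def fun_eq_iff)

definition rowv :: "'a::field set \<Rightarrow> 'a list \<Rightarrow> nat \<Rightarrow> (nat \<Rightarrow> 'a) \<Rightarrow> nat \<Rightarrow> nat \<Rightarrow> 'a" where
  "rowv K bs m v t = (\<lambda>j. if j < m then coords K bs (v j) t else 0)"

lemma rowspace_rowv: "rowspace_Gamma K bs m v = kspan K {rowv K bs m v t | t. t < length bs}"
  by (simp add: rowspace_Gamma_def rowv_def)

lemma rowspace_sub_iff: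
  fixes v :: "nat \<Rightarrow> 'a::{field,finite}"
  assumes K: "subfield K" and fb: "field_basis K bs" and L: "ksubspace K L" "L \<subseteq> kvecs K m"
    and v: "\<forall>j\<ge>m. v j = 0"
  shows "rowspace_Gamma K bs m v \<subseteq> L \<longleftrightarrow> v \<in> fv.span L"
proof
  assume h: "rowspace_Gamma K bs m v \<subseteq> L"
  have r: "rowv K bs m v t \<in> L" if "t < length bs" for t
    using h kspan_base[OF K, of "rowv K bs m v t" "{rowv K bs m v t | t. t < length bs}"] that
    unfolding rowspace_rowv by blast
  have "v = (\<Sum>t<length bs. scl (bs ! t) (rowv K bs m v t))"
  proof
    fix j
    show "v j = (\<Sum>t<length bs. scl (bs ! t) (rowv K bs m v t)) j"
    proof (cases "j < m")
      case True
      have "v j = (\<Sum>t<length bs. coords K bs (v j) t * bs ! t)" using coords_spec[OF fb] by blast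
      then show ?thesis using True by (simp add: fun_sum_apply scl_apply rowv_def mult.commute)
    next
      case False
      then show ?thesis using v by (simp add: fun_sum_apply scl_apply rowv_def)
    qed
  qed
  also have "\<dots> \<in> fv.span L" using r by (intro fv.span_sum fv.span_scale fv.span_base) auto
  finally show "v \<in> fv.span L" .
next
  assume "v \<in> fv.span L"
  then obtain T r where T: "finite T" "T \<subseteq> L" "v = (\<Sum>a\<in>T. scl (r a) a)"
    unfolding fv.span_explicit by blast
  have TK: "\<forall>w\<in>T. \<forall>j. w j \<in> K" and T0: "\<forall>w\<in>T. \<forall>j\<ge>m. w j = 0"
    using T(2) L(2) by (auto simp: kvecs_def)
  have rowin: "rowv K bs m v t \<in> L" if t: "t < length bs" for t
  proof -
    have "rowv K bs m v t = (\<lambda>j. \<Sum>w\<in>T. coords K bs (r w) t * w j)"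
    proof
      fix j
      show "rowv K bs m v t j = (\<Sum>w\<in>T. coords K bs (r w) t * w j)"
      proof (cases "j < m")
        case True
        have vj: "v j = (\<Sum>w\<in>T. w j * r w)" using T(3) by (simp add: fun_sum_apply scl_apply mult.commute)
        have "coords K bs (v j) = (\<lambda>t. \<Sum>w\<in>T. w j * coords K bs (r w) t)"
          unfolding vj by (rule coords_lin[OF K fb T(1)]) (use TK in auto)
        then show ?thesis using True by (simp add: rowv_def mult.commute)
      next
        case False
        then show ?thesis using T0 by (simp add: rowv_def sum.neutral)
      qed
    qed
    also have "\<dots> \<in> kspan K L"
      unfolding kspan_def
      by (rule CollectI, rule exI[of _ T], rule exI[of _ "\<lambda>w. coords K bs (r w) t"])
         (use T(1,2) coords_spec[OF fb] t in auto)
    also have "\<dots> \<subseteq> L" by (rule kspan_sub[OF L(1) order_refl])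
    finally show ?thesis .
  qed
  show "rowspace_Gamma K bs m v \<subseteq> L"
    unfolding rowspace_rowv using rowin by (intro kspan_sub[OF L(1)]) auto
qed

lemma VL_char:
  fixes L :: "nat \<Rightarrow> (nat \<Rightarrow> 'a::{field,finite}) set"
  assumes K: "\<forall>i<l. subfield (K i)" and fb: "\<forall>i<l. field_basis (K i) (\<beta> i)"
    and L: "\<forall>i<l. ksubspace (K i) (L i) \<and> L i \<subseteq> kvecs (K i) (n i)"
  shows "VL l n K \<beta> L = {c \<in> Fvecs l n. \<forall>i<l. blk c i \<in> fv.span (L i)}"
proof -
  have "rowspace_Gamma (K i) (\<beta> i) (n i) (\<lambda>j. c (i, j)) \<subseteq> L i \<longleftrightarrow> blk c i \<in> fv.span (L i)"
    if "c \<in> Fvecs l n" "i < l" for c i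
    using rowspace_sub_iff[of "K i" "\<beta> i" "L i" "n i" "blk c i"] K fb L that
    by (auto simp: blk_def Fvecs_def)
  then show ?thesis unfolding VL_def by auto
qed

lemma subspace_blkspan:
  fixes L :: "nat \<Rightarrow> (nat \<Rightarrow> 'a::field) set"
  shows "fv.subspace {c \<in> Fvecs l n. \<forall>i<l. blk c i \<in> fv.span (L i)}"
  unfolding fv.subspace_def
proof (intro conjI ballI allI)
  have "blk (0 :: nat \<times> nat \<Rightarrow> 'a) i = 0" for i by (simp add: blk_def fun_eq_iff)
  then show "0 \<in> {c \<in> Fvecs l n. \<forall>i<l. blk c i \<in> fv.span (L i)}"
    by (simp add: Fvecs_FS FS_def fv.span_zero)
next
  fix x y assume "x \<in> {c \<in> Fvecs l n. \<forall>i<l. blk c i \<in> fv.span (L i)}"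
    "y \<in> {c \<in> Fvecs l n. \<forall>i<l. blk c i \<in> fv.span (L i)}"
  then show "x + y \<in> {c \<in> Fvecs l n. \<forall>i<l. blk c i \<in> fv.span (L i)}"
    by (simp add: Fvecs_FS FS_def blk_add fv.span_add)
next
  fix a x assume "x \<in> {c \<in> Fvecs l n. \<forall>i<l. blk c i \<in> fv.span (L i)}"
  then show "scl a x \<in> {c \<in> Fvecs l n. \<forall>i<l. blk c i \<in> fv.span (L i)}"
    by (simp add: Fvecs_FS FS_def blk_scl fv.span_scale scl_apply)
qed


lemma dim_inj_image:
  fixes S :: "('i \<Rightarrow> 'a::{field,finite}) set" and f :: "('i \<Rightarrow> 'a) \<Rightarrow> ('j \<Rightarrow> 'a)"
  assumes "lin f" "fv.subspace S" "finite S" "inj_on f S"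
  shows "fv.dim (f ` S) = fv.dim S"
proof -
  have "card (f ` S) = card S" using card_image[OF assms(4)] .
  then have "card (UNIV :: 'a set) ^ fv.dim (f ` S) = card (UNIV :: 'a set) ^ fv.dim S"
    using card_subspace[OF lin_image_subspace[OF assms(1,2)]] card_subspace[OF assms(2,3)] assms(3)
    by simp
  moreover have "1 < card (UNIV :: 'a set)" using card_field_ge2[where 'a='a] by simp
  ultimately show ?thesis by simp
qed

lemma genmat_prop:
  fixes V :: "(nat \<Rightarrow> 'a::{field,finite}) set"
  assumes K: "subfield K" and V: "ksubspace K V" "finite V"
  shows "(\<forall>r<kdim K V. genmat K V r \<in> V) \<and> kspan K (genmat K V ` {..<kdim K V}) = V"
proof -
  have ex: "\<exists>d B. finite B \<and> card B = d \<and> B \<subseteq> V \<and> kspan K B = V"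
  proof (intro exI conjI)
    show "kspan K V = V" using kspan_sub[OF V(1) order_refl] kspan_base[OF K] by blast
  qed (use V(2) in auto)
  have "\<exists>B. finite B \<and> card B = kdim K V \<and> B \<subseteq> V \<and> kspan K B = V"
    unfolding kdim_def by (rule LeastI_ex[OF ex])
  then obtain B where B: "finite B" "card B = kdim K V" "B \<subseteq> V" "kspan K B = V" by blast
  obtain h where h: "bij_betw h {0..<card B} B" using ex_bij_betw_nat_finite[OF B(1)] by blast
  have "\<exists>A. (\<forall>r<kdim K V. A r \<in> V) \<and> kspan K (A ` {..<kdim K V}) = V"
  proof (intro exI conjI allI impI)
    show "h r \<in> V" if "r < kdim K V" for r using h B that by (auto simp: bij_betw_def)
    have "h ` {..<kdim K V} = B" using h B(2) by (simp add: bij_betw_def lessThan_atLeast0)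
    then show "kspan K (h ` {..<kdim K V}) = V" using B(4) by simp
  qed
  then show ?thesis unfolding genmat_def by (rule someI_ex)
qed

lemma genmat_indep:
  fixes V :: "(nat \<Rightarrow> 'a::{field,finite}) set"
  assumes K: "subfield K" and fb: "field_basis K bs" and V: "ksubspace K V" "V \<subseteq> kvecs K m"
  defines "A \<equiv> genmat K V" and "d \<equiv> kdim K V"
  shows "inj_on A {..<d}" "fv.independent (A ` {..<d})" "fv.span (A ` {..<d}) = fv.span V"
    "\<forall>r<d. A r \<in> V" "d = fv.dim V"
proof -
  have fV: "finite V" using finite_subset[OF subset_trans[OF V(2) kvecs_sub_FS] finite_FS] by blast
  note gp = genmat_prop[OF K V(1) fV, folded A_def d_def]
  let ?R = "A ` {..<d}"
  show dd: "d = fv.dim V" unfolding d_def by (rule kdim_K[OF K fb V])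
  show Ain: "\<forall>r<d. A r \<in> V" using gp by blast
  have RV: "?R \<subseteq> V" using Ain by auto
  have VR: "V \<subseteq> fv.span ?R" using gp kspan_sub_span[of K ?R] by simp
  show sp: "fv.span ?R = fv.span V"
    using RV VR fv.span_mono fv.span_span fv.span_minimal fv.subspace_span
    by (metis fv.span_eq)
  have cle: "card ?R \<le> d" using card_image_le by fastforce
  have dle: "d \<le> card ?R" using fv.dim_le_card[OF VR] dd by simp
  then have cR: "card ?R = d" using cle by simp
  show "inj_on A {..<d}" using cR by (intro eq_card_imp_inj_on) auto
  show "fv.independent ?R"
  proof
    assume "fv.dependent ?R"
    then obtain a where a: "a \<in> ?R" "a \<in> fv.span (?R - {a})" unfolding fv.dependent_def by blast
    have "fv.span ?R = fv.span (insert a (?R - {a}))" using a(1) by (simp add: insert_absorb)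
    also have "\<dots> = fv.span (?R - {a})" by (rule fv.span_redundant[OF a(2)])
    finally have "V \<subseteq> fv.span (?R - {a})" using VR by simp
    then have "d \<le> card (?R - {a})" using fv.dim_le_card[of V "?R - {a}"] dd by simp
    moreover have "card (?R - {a}) < card ?R" using a(1) by (intro card_Diff1_less) auto
    ultimately show False using cR by simp
  qed
qed


lemma ip_Sigma:
  assumes "finite A" "\<forall>a\<in>A. finite (B a)"
  shows "ip (Sigma A B) f g = (\<Sum>a\<in>A. \<Sum>b\<in>B a. f (a, b) * g (a, b))"
  unfolding ip_def using sum.Sigma[OF assms, of "\<lambda>a b. f (a, b) * g (a, b)"] by (simp add: split_def)

lemma dual_orth: "dual_code l n C = orth (Iset l n) C"
  by (auto simp: dual_code_def orth_def Fvecs_FS Iset_def ip_Sigma)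

lemma nullity_eq:
  fixes C :: "(nat \<times> nat \<Rightarrow> 'a::{field,finite}) set"
  assumes K: "\<forall>i<l. subfield (K i)" and fb: "\<forall>i<l. field_basis (K i) (\<beta> i)"
    and L: "\<forall>i<l. ksubspace (K i) (L i) \<and> L i \<subseteq> kvecs (K i) (n i)"
    and C: "C \<subseteq> Fvecs l n" "fv.subspace C"
  shows "nullityC l n K C L = fv.dim (C \<inter> VL l n K \<beta> L)"
proof -
  define d where "d i = kdim (K i) (L i)" for i
  define A where "A i = genmat (K i) (L i)" for i
  define I where "I = Iset l n"
  define J where "J = Sigma {..<l} (\<lambda>i. {..<d i})"
  define T where "T y = (\<lambda>(i, j). if i < l \<and> j < n i then (\<Sum>r<d i. y (i, r) * A i r j) else 0)"
    for y :: "nat \<times> nat \<Rightarrow> 'a"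
  define P where "P = PiL l n K L"
  have fI: "finite I" by (simp add: I_def finite_Iset)
  have fJ: "finite J" by (simp add: J_def)
  have gi: "inj_on (A i) {..<d i}" "fv.independent (A i ` {..<d i})"
    "fv.span (A i ` {..<d i}) = fv.span (L i)" "\<forall>r<d i. A i r \<in> L i" "d i = fv.dim (L i)"
    if "i < l" for i
    using genmat_indep[of "K i" "\<beta> i" "L i" "n i"] K fb L that unfolding A_def d_def by auto
  have A0: "A i r j = 0" if "i < l" "r < d i" "n i \<le> j" for i r j
  proof -
    have "A i r \<in> L i" using gi(4)[OF that(1)] that(2) by blast
    then have "A i r \<in> kvecs (K i) (n i)" using L that(1) by blast
    then show ?thesis using that(3) by (simp add: kvecs_def)
  qed
  have Pdef: "P x = (\<lambda>(i, r). if i < l \<and> r < d i then (\<Sum>j<n i. x (i, j) * A i r j) else 0)" for x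
    unfolding P_def PiL_def d_def A_def by (rule refl)
  have linP: "lin P"
    unfolding lin_def Pdef
    by (auto simp: fun_eq_iff scl_apply sum.distrib sum_distrib_left algebra_simps split: prod.split)
  have PFS: "P x \<in> FS J" for x by (auto simp: Pdef FS_def J_def)
  have linT: "lin T"
    unfolding lin_def T_def
    by (auto simp: fun_eq_iff scl_apply sum.distrib sum_distrib_left algebra_simps split: prod.split)
  have TFS: "T y \<in> FS I" for y by (auto simp: T_def FS_def I_def Iset_def)
  have adj: "ip I x (T y) = ip J (P x) y" for x y
  proof -
    have "ip I x (T y) = (\<Sum>i<l. \<Sum>j<n i. x (i, j) * T y (i, j))"
      unfolding I_def Iset_def by (rule ip_Sigma) auto
    also have "\<dots> = (\<Sum>i<l. \<Sum>j<n i. \<Sum>r<d i. x (i, j) * y (i, r) * A i r j)"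
      by (intro sum.cong refl) (simp add: T_def sum_distrib_left mult.assoc)
    also have "\<dots> = (\<Sum>i<l. \<Sum>r<d i. \<Sum>j<n i. x (i, j) * y (i, r) * A i r j)"
      by (rule sum.cong[OF refl], rule sum.swap)
    also have "\<dots> = (\<Sum>i<l. \<Sum>r<d i. P x (i, r) * y (i, r))"
      by (intro sum.cong refl) (simp add: Pdef sum_distrib_left sum_distrib_right algebra_simps)
    also have "\<dots> = ip J (P x) y"
      unfolding J_def by (rule ip_Sigma[symmetric]) auto
    finally show ?thesis .
  qed
  have blkT: "blk (T y) i = (\<Sum>r<d i. scl (y (i, r)) (A i r))" if "i < l" for y i
  proof
    fix j
    show "blk (T y) i j = (\<Sum>r<d i. scl (y (i, r)) (A i r)) j"
      using that A0 by (cases "j < n i") (auto simp: blk_def T_def fun_sum_apply scl_apply sum.neutral)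
  qed
  have Tinj0: "z = 0" if "z \<in> FS J" "T z = 0" for z
  proof
    fix p :: "nat \<times> nat"
    obtain i r where p: "p = (i, r)" by (cases p)
    show "z p = 0 p"
    proof (cases "i < l \<and> r < d i")
      case False
      then show ?thesis using that(1) p by (auto simp: FS_def J_def)
    next
      case True
      let ?R = "A i ` {..<d i}"
      define u where "u v = z (i, the_inv_into {..<d i} (A i) v)" for v
      have "(\<Sum>v\<in>?R. scl (u v) v) = (\<Sum>r<d i. scl (u (A i r)) (A i r))"
        by (rule sum.reindex[OF gi(1)[OF conjunct1[OF True]], unfolded comp_def])
      also have "\<dots> = (\<Sum>r<d i. scl (z (i, r)) (A i r))"
        using gi(1)[OF conjunct1[OF True]] by (intro sum.cong refl) (simp add: u_def the_inv_into_f_f)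
      also have "\<dots> = blk (T z) i" using blkT True by simp
      also have "\<dots> = 0" using that(2) by (simp add: blk_def fun_eq_iff)
      finally have s0: "(\<Sum>v\<in>?R. scl (u v) v) = 0" .
      have "u (A i r) = z (i, r)" using gi(1)[OF conjunct1[OF True]] True
        by (simp add: u_def the_inv_into_f_f)
      show ?thesis
      proof (rule ccontr)
        assume "z p \<noteq> 0 p"
        then have "u (A i r) \<noteq> 0" using \<open>u (A i r) = z (i, r)\<close> p by simp
        then have "fv.dependent ?R" unfolding fv.dependent_finite[OF finite_imageI[OF finite_lessThan]]
          using s0 True by blast
        then show False using gi(2) True by simp
      qed
    qed
  qed
  have Tinj: "inj_on T S" if "S \<subseteq> FS J" for S
  proof (rule inj_onI)
    fix a b assume ab: "a \<in> S" "b \<in> S" "T a = T b"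
    have "T (a - b) = 0" using lin_diff[OF linT] ab(3) by simp
    moreover have "a - b \<in> FS J" using ab(1,2) that fv.subspace_diff[OF subspace_FS] by blast
    ultimately show "a = b" using Tinj0 by fastforce
  qed
  have Timg: "T ` FS J = VL l n K \<beta> L"
  proof -
    have "T ` FS J = {c \<in> Fvecs l n. \<forall>i<l. blk c i \<in> fv.span (L i)}"
    proof
      show "T ` FS J \<subseteq> {c \<in> Fvecs l n. \<forall>i<l. blk c i \<in> fv.span (L i)}"
      proof clarify
        fix y :: "nat \<times> nat \<Rightarrow> 'a" assume "y \<in> FS J"
        have "blk (T y) i \<in> fv.span (L i)" if "i < l" for i
        proof -
          have "blk (T y) i \<in> fv.span (A i ` {..<d i})"
            unfolding blkT[OF that] by (intro fv.span_sum fv.span_scale fv.span_base) auto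
          then show ?thesis using gi(3)[OF that] by simp
        qed
        then show "T y \<in> Fvecs l n \<and> (\<forall>i<l. blk (T y) i \<in> fv.span (L i))"
          using TFS by (simp add: Fvecs_FS I_def)
      qed
    next
      show "{c \<in> Fvecs l n. \<forall>i<l. blk c i \<in> fv.span (L i)} \<subseteq> T ` FS J"
      proof clarify
        fix c assume c: "c \<in> Fvecs l n" "\<forall>i<l. blk c i \<in> fv.span (L i)"
        have exu: "\<exists>u. blk c i = (\<Sum>r<d i. scl (u (A i r)) (A i r))" if "i < l" for i
        proof -
          have "blk c i \<in> fv.span (A i ` {..<d i})" using c(2) gi(3) that by simp
          then obtain u where "blk c i = (\<Sum>v\<in>A i ` {..<d i}. scl (u v) v)"
            unfolding fv.span_finite[OF finite_imageI[OF finite_lessThan]] by blast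
          also have "\<dots> = (\<Sum>r<d i. scl (u (A i r)) (A i r))"
            by (rule sum.reindex[OF gi(1)[OF that], unfolded comp_def])
          finally show ?thesis by blast
        qed
        define U where "U i = (SOME u. blk c i = (\<Sum>r<d i. scl (u (A i r)) (A i r)))" for i
        have U: "blk c i = (\<Sum>r<d i. scl (U i (A i r)) (A i r))" if "i < l" for i
          unfolding U_def by (rule someI_ex[OF exu[OF that]])
        define y where "y = (\<lambda>(i, r). if i < l \<and> r < d i then U i (A i r) else 0)"
        have "y \<in> FS J" by (auto simp: y_def FS_def J_def)
        moreover have "T y = c"
        proof
          fix p :: "nat \<times> nat"
          obtain i j where p: "p = (i, j)" by (cases p)
          show "T y p = c p"
          proof (cases "i < l \<and> j < n i")
            case True
            have "c (i, j) = blk c i j" by (simp add: blk_def)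
            also have "\<dots> = (\<Sum>r<d i. U i (A i r) * A i r j)"
              using U[of i] True by (simp add: fun_sum_apply scl_apply)
            finally show ?thesis using True p by (simp add: T_def y_def)
          next
            case False
            then show ?thesis using c(1) p by (auto simp: T_def Fvecs_def)
          qed
        qed
        ultimately show "c \<in> T ` FS J" by blast
      qed
    qed
    then show ?thesis using VL_char[OF K fb L] by simp
  qed
  let ?D = "orth I C"
  have Dd: "dual_code l n C = ?D" by (simp add: dual_orth I_def)
  have sPD: "fv.subspace (P ` ?D)" by (rule lin_image_subspace[OF linP subspace_orth])
  have PDsub: "P ` ?D \<subseteq> FS J" using PFS by auto
  have fPD: "finite (P ` ?D)" using finite_subset[OF PDsub finite_FS[OF fJ]] .
  have rho: "rhoC l n K C L = fv.dim (P ` ?D)"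
    unfolding rhoC_def P_def[symmetric] Dd by (rule kdim_UNIV[OF sPD fPD])
  have od: "fv.dim (orth J (P ` ?D)) + fv.dim (P ` ?D) = card J"
    by (rule orth_dim[OF fJ PDsub sPD])
  have CI: "C \<subseteq> FS I" using C(1) by (simp add: Fvecs_FS I_def)
  have oo: "orth I (orth I C) = C" by (rule orth_orth[OF fI CI C(2)])
  define Y where "Y = {y \<in> FS J. T y \<in> C}"
  have oY: "orth J (P ` ?D) = Y"
  proof -
    have "y \<in> orth J (P ` ?D) \<longleftrightarrow> y \<in> Y" for y
    proof -
      have key: "ip J y (P x) = ip I (T y) x" for x
        using adj[of x y] ip_sym[of J y "P x"] ip_sym[of I x "T y"] by simp
      have "y \<in> orth J (P ` ?D) \<longleftrightarrow> y \<in> FS J \<and> (\<forall>x\<in>?D. ip J y (P x) = 0)"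
        unfolding orth_def[of J] by blast
      also have "\<dots> \<longleftrightarrow> y \<in> FS J \<and> (\<forall>x\<in>?D. ip I (T y) x = 0)"
        by (simp add: key)
      also have "\<dots> \<longleftrightarrow> y \<in> FS J \<and> T y \<in> orth I ?D"
        using TFS by (auto simp: orth_def[of I ?D])
      finally show ?thesis using oo by (simp add: Y_def)
    qed
    then show ?thesis by blast
  qed
  have sY: "fv.subspace Y"
    unfolding Y_def fv.subspace_def
    using lin_zero[OF linT] fv.subspace_0[OF C(2)] fv.subspace_add[OF C(2)] fv.subspace_scale[OF C(2)]
      linT
    by (auto simp: FS_def lin_def scl_apply)
  have fY: "finite Y" using finite_subset[of Y "FS J"] finite_FS[OF fJ] by (auto simp: Y_def)
  have TY: "T ` Y = C \<inter> VL l n K \<beta> L" using Timg by (auto simp: Y_def)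
  have dY: "fv.dim Y = fv.dim (C \<inter> VL l n K \<beta> L)"
    using dim_inj_image[OF linT sY fY Tinj] TY by (auto simp: Y_def)
  have cJ: "card J = Rk l K L" by (simp add: J_def Rk_def d_def)
  show ?thesis
    unfolding nullityC_def rho using od oY dY cJ by simp
qed


lemma Plat_sub: "L \<in> Plat l n K \<Longrightarrow> \<forall>i<l. ksubspace (K i) (L i) \<and> L i \<subseteq> kvecs (K i) (n i)"
  by (simp add: Plat_def)

lemma dim0_span:
  fixes S :: "(nat \<Rightarrow> 'a::{field,finite}) set"
  assumes "finite S" "fv.dim S = 0" shows "fv.span S = {0}"
proof -
  obtain B where B: "B \<subseteq> S" "fv.independent B" "S \<subseteq> fv.span B" "card B = fv.dim S"
    by (rule fv.basis_exists)
  have "B = {}" using B(1,4) assms finite_subset by fastforce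
  then have "S \<subseteq> {0}" using B(3) by simp
  then show ?thesis using fv.span_mono[of S "{0}"] fv.span_zero[of S] by auto
qed

lemma dim_insert_le:
  fixes X Y :: "('i \<Rightarrow> 'a::{field,finite}) set"
  assumes "finite Y" "X \<subseteq> fv.span (insert x0 Y)"
  shows "fv.dim X \<le> fv.dim Y + 1"
proof -
  obtain BY where BY: "BY \<subseteq> Y" "fv.independent BY" "Y \<subseteq> fv.span BY" "card BY = fv.dim Y"
    by (rule fv.basis_exists)
  have fBY: "finite BY" using BY(1) assms(1) finite_subset by blast
  have "insert x0 Y \<subseteq> fv.span (insert x0 BY)"
    using BY(3) fv.span_mono[of BY "insert x0 BY"] fv.span_base[of x0 "insert x0 BY"] by auto
  then have "fv.span (insert x0 Y) \<subseteq> fv.span (insert x0 BY)"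
    using fv.span_minimal[OF _ fv.subspace_span] by blast
  then have "X \<subseteq> fv.span (insert x0 BY)" using assms(2) by blast
  then have "fv.dim X \<le> card (insert x0 BY)" using fv.dim_le_card fBY by blast
  also have "\<dots> \<le> card BY + 1" using fBY by (simp add: card_insert_if)
  finally show ?thesis using BY(4) by simp
qed

lemma hyper:
  fixes C :: "(nat \<times> nat \<Rightarrow> 'a::{field,finite}) set"
  assumes K: "\<forall>i<l. subfield (K i)" and fb: "\<forall>i<l. field_basis (K i) (\<beta> i)"
    and C: "C \<subseteq> Fvecs l n" "fv.subspace C"
    and L0: "L0 \<in> Plat l n K" and pos: "fv.dim (C \<inter> VL l n K \<beta> L0) > 0"
  shows "\<exists>L'\<in>Plat l n K. Rk l K L' + 1 = Rk l K L0 \<and>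
           fv.dim (C \<inter> VL l n K \<beta> L0) \<le> fv.dim (C \<inter> VL l n K \<beta> L') + 1"
proof -
  let ?X = "C \<inter> VL l n K \<beta> L0"
  note L0s = Plat_sub[OF L0]
  have VL0: "VL l n K \<beta> L0 = {c \<in> Fvecs l n. \<forall>i<l. blk c i \<in> fv.span (L0 i)}"
    by (rule VL_char[OF K fb L0s])
  obtain c where c: "c \<in> ?X" "c \<noteq> 0" using dim_pos_ex[OF pos] by blast
  then obtain p where p: "c p \<noteq> 0" by (auto simp: fun_eq_iff)
  obtain j j0 where jj: "p = (j, j0)" by (cases p)
  have jl: "j < l" using c(1) p jj VL0 by (auto simp: Fvecs_def)
  have bc: "blk c j \<in> fv.span (L0 j)" using c(1) VL0 jl by auto
  have bc0: "blk c j \<noteq> 0" using p jj by (auto simp: blk_def fun_eq_iff)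
  have fL0j: "finite (L0 j)"
    using finite_subset[OF subset_trans[OF conjunct2[OF L0s[rule_format, OF jl]] kvecs_sub_FS] finite_FS]
    by blast
  have dpos: "fv.dim (L0 j) > 0"
  proof (rule ccontr)
    assume "\<not> ?thesis"
    then have "fv.span (L0 j) = {0}" using dim0_span[OF fL0j] by simp
    then show False using bc bc0 by simp
  qed
  obtain B where B: "B \<subseteq> L0 j" "fv.independent B" "L0 j \<subseteq> fv.span B" "card B = fv.dim (L0 j)"
    by (rule fv.basis_exists)
  have fB: "finite B" using B(1) fL0j finite_subset by blast
  obtain b where b: "b \<in> B" using B(4) dpos by (metis card.empty ex_in_conv less_irrefl)
  define B' where "B' = B - {b}"
  define Lj where "Lj = L0 j \<inter> fv.span B'"
  define L' where "L' = L0(j := Lj)"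
  have Kj: "subfield (K j)" using K jl by simp
  have fbj: "field_basis (K j) (\<beta> j)" using fb jl by simp
  have L0j: "ksubspace (K j) (L0 j)" "L0 j \<subseteq> kvecs (K j) (n j)" using L0s jl by auto
  have Ljk: "ksubspace (K j) Lj"
    unfolding ksubspace_def
  proof (intro conjI ballI)
    have "(\<lambda>_. 0) = (0 :: nat \<Rightarrow> 'a)" by (simp add: zero_fun_def)
    then show "(\<lambda>_. 0) \<in> Lj" using L0j(1) fv.span_zero[of B'] unfolding ksubspace_def Lj_def by simp
  next
    fix u v assume uv: "u \<in> Lj" "v \<in> Lj"
    have e: "(\<lambda>x. u x + v x) = u + v" by (simp add: plus_fun_def)
    have "(\<lambda>x. u x + v x) \<in> L0 j" using L0j(1) uv unfolding ksubspace_def Lj_def by blast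
    moreover have "u + v \<in> fv.span B'" using uv fv.span_add unfolding Lj_def by blast
    ultimately show "(\<lambda>x. u x + v x) \<in> Lj" unfolding Lj_def e by blast
  next
    fix a v assume av: "a \<in> K j" "v \<in> Lj"
    have e: "(\<lambda>x. a * v x) = scl a v" by (simp add: scl_def)
    have "(\<lambda>x. a * v x) \<in> L0 j" using L0j(1) av unfolding ksubspace_def Lj_def by blast
    moreover have "scl a v \<in> fv.span B'" using av fv.span_scale unfolding Lj_def by blast
    ultimately show "(\<lambda>x. a * v x) \<in> Lj" unfolding Lj_def e by blast
  qed
  have Ljv: "Lj \<subseteq> kvecs (K j) (n j)" using L0j(2) by (auto simp: Lj_def)
  have L'P: "L' \<in> Plat l n K"
    using L0 Ljk Ljv jl unfolding Plat_def L'_def by auto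
  have B'Lj: "B' \<subseteq> Lj" using B(1) by (auto simp: Lj_def B'_def intro: fv.span_base)
  have LjB': "Lj \<subseteq> fv.span B'" by (auto simp: Lj_def)
  have spLj: "fv.span Lj = fv.span B'"
    using B'Lj LjB' by (simp add: fv.span_eq fv.span_superset subset_trans)
  have indB': "fv.independent B'" using fv.independent_mono[OF B(2), of B'] by (auto simp: B'_def)
  have dLj: "kdim (K j) Lj = card B'"
    using kdim_K[OF Kj fbj Ljk Ljv] fv.basis_card_eq_dim[OF B'Lj LjB' indB'] by simp
  have dL0j: "kdim (K j) (L0 j) = card B"
    using kdim_K[OF Kj fbj L0j] B(4) by simp
  have cB': "card B' + 1 = card B"
  proof -
    have "card B > 0" using b fB card_gt_0_iff by blast
    then show ?thesis using b fB by (simp add: B'_def card_Diff_singleton)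
  qed
  have Rk: "Rk l K L' + 1 = Rk l K L0"
  proof -
    have "Rk l K L' = kdim (K j) Lj + (\<Sum>i\<in>{..<l} - {j}. kdim (K i) (L0 i))"
      unfolding Rk_def using jl by (subst sum.remove[of _ j]) (auto simp: L'_def intro!: sum.cong)
    moreover have "Rk l K L0 = kdim (K j) (L0 j) + (\<Sum>i\<in>{..<l} - {j}. kdim (K i) (L0 i))"
      unfolding Rk_def using jl by (subst sum.remove[of _ j]) auto
    ultimately show ?thesis using dLj dL0j cB' by simp
  qed
  have spL0j: "fv.span (L0 j) = fv.span (insert b B')"
  proof -
    have "insert b B' = B" using b by (auto simp: B'_def)
    moreover have "fv.span (L0 j) = fv.span B" using B(1,3) by (simp add: fv.span_eq fv.span_superset subset_trans)
    ultimately show ?thesis by simp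
  qed
  have VL': "VL l n K \<beta> L' = {c \<in> Fvecs l n. \<forall>i<l. blk c i \<in> fv.span (L' i)}"
    by (rule VL_char[OF K fb Plat_sub[OF L'P]])
  let ?Y = "C \<inter> VL l n K \<beta> L'"
  have fC: "finite C" using finite_subset[OF C(1)[unfolded Fvecs_FS] finite_FS[OF finite_Iset]] .
  have fY: "finite ?Y" using fC by simp
  have main: "?X \<subseteq> fv.span (insert x0 ?Y)" if x0: "x0 \<in> ?X" "x0 \<notin> VL l n K \<beta> L'" for x0
  proof
    fix x assume x: "x \<in> ?X"
    have xC: "x \<in> C" and x0C: "x0 \<in> C" using x x0 by auto
    have xF: "x \<in> FS (Iset l n)" and x0F: "x0 \<in> FS (Iset l n)"
      using x x0 VL0 by (auto simp: Fvecs_FS)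
    have x0b: "\<forall>i<l. blk x0 i \<in> fv.span (L0 i)" using x0 VL0 by auto
    have xb: "\<forall>i<l. blk x i \<in> fv.span (L0 i)" using x VL0 by auto
    have "blk x j \<in> fv.span (insert b B')" using x VL0 jl spL0j by auto
    then obtain lam where lam: "blk x j - scl lam b \<in> fv.span B'" unfolding fv.span_insert by blast
    have "blk x0 j \<in> fv.span (insert b B')" using x0 VL0 jl spL0j by auto
    then obtain mu where mu: "blk x0 j - scl mu b \<in> fv.span B'" unfolding fv.span_insert by blast
    have mu0: "mu \<noteq> 0"
    proof
      assume "mu = 0"
      moreover have "scl 0 b = (0 :: nat \<Rightarrow> 'a)" by (simp add: fun_eq_iff scl_apply)
      ultimately have "blk x0 j \<in> fv.span B'" using mu by simp
      then have "blk x0 j \<in> fv.span Lj" using spLj by simp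
      then have "\<forall>i<l. blk x0 i \<in> fv.span (L' i)" using x0b by (simp add: L'_def)
      then have "x0 \<in> VL l n K \<beta> L'" using x0F VL' by (simp add: Fvecs_FS)
      then show False using x0(2) by simp
    qed
    define z where "z = x - scl (lam / mu) x0"
    have zC: "z \<in> C" unfolding z_def
      by (rule fv.subspace_diff[OF C(2) xC fv.subspace_scale[OF C(2) x0C]])
    have zF: "z \<in> Fvecs l n" unfolding z_def Fvecs_FS
      by (rule fv.subspace_diff[OF subspace_FS xF fv.subspace_scale[OF subspace_FS x0F]])
    have "blk z i \<in> fv.span (L' i)" if "i < l" for i
    proof (cases "i = j")
      case True
      have "blk z j = (blk x j - scl lam b) - scl (lam / mu) (blk x0 j - scl mu b)"
      proof
        fix t
        have e: "lam / mu * (mu * b t) = lam * b t" using mu0 by simp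
        have l1: "blk z j t = x (j, t) - lam / mu * x0 (j, t)"
          unfolding z_def blk_def by (simp only: fun_diff_apply' scl_apply)
        have r1: "((blk x j - scl lam b) - scl (lam / mu) (blk x0 j - scl mu b)) t
            = (x (j, t) - lam * b t) - lam / mu * (x0 (j, t) - mu * b t)"
          unfolding blk_def by (simp only: fun_diff_apply' scl_apply)
        have "(x (j, t) - lam * b t) - lam / mu * (x0 (j, t) - mu * b t) = x (j, t) - lam / mu * x0 (j, t)"
          by (simp only: right_diff_distrib e) (simp add: algebra_simps)
        then show "blk z j t = ((blk x j - scl lam b) - scl (lam / mu) (blk x0 j - scl mu b)) t"
          using l1 r1 by simp
      qed
      also have "\<dots> \<in> fv.span B'" by (rule fv.span_diff[OF lam fv.span_scale[OF mu]])
      finally have "blk z j \<in> fv.span Lj" using spLj by simp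
      moreover have "L' i = Lj" using True by (simp add: L'_def)
      ultimately show ?thesis using True by simp
    next
      case False
      have "blk z i = blk x i - scl (lam / mu) (blk x0 i)" by (simp add: z_def blk_diff blk_scl)
      also have "\<dots> \<in> fv.span (L0 i)"
        using xb x0b that by (intro fv.span_diff fv.span_scale) auto
      moreover have "L' i = L0 i" using False by (simp add: L'_def)
      ultimately show ?thesis by simp
    qed
    then have "z \<in> VL l n K \<beta> L'" using zF VL' by simp
    then have "z \<in> ?Y" using zC by simp
    then have "z \<in> fv.span (insert x0 ?Y)" by (intro fv.span_base) auto
    moreover have "scl (lam / mu) x0 \<in> fv.span (insert x0 ?Y)" by (intro fv.span_scale fv.span_base) auto
    ultimately have "z + scl (lam / mu) x0 \<in> fv.span (insert x0 ?Y)" by (rule fv.span_add)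
    then show "x \<in> fv.span (insert x0 ?Y)" by (simp add: z_def)
  qed
  then have "fv.dim ?X \<le> fv.dim ?Y + 1"
  proof (cases "?X \<subseteq> VL l n K \<beta> L'")
    case True
    then have "?X \<subseteq> fv.span (insert 0 ?Y)" using fv.span_superset by blast
    then show ?thesis using dim_insert_le[OF fY, of ?X 0] by blast
  next
    case False
    then obtain x0 where "x0 \<in> ?X" "x0 \<notin> VL l n K \<beta> L'" by blast
    then show ?thesis using dim_insert_le[OF fY main] by blast
  qed
  then show ?thesis using L'P Rk by blast
qed


lemma ksubspace_kvecs: "subfield K \<Longrightarrow> ksubspace K (kvecs K m)"
  by (auto simp: ksubspace_def kvecs_def subfield_def)

lemma blk_in_span_kvecs:
  fixes c :: "nat \<times> nat \<Rightarrow> 'a::field"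
  assumes K: "subfield K" and c: "c \<in> Fvecs l n" and i: "i < l"
  shows "blk c i \<in> fv.span (kvecs K (n i))"
proof -
  have "blk c i = (\<Sum>j<n i. scl (c (i, j)) (ev j))"
  proof
    fix t
    have "(\<Sum>j<n i. scl (c (i, j)) (ev j)) t = (\<Sum>j<n i. c (i, j) * ev j t)"
      by (simp add: fun_sum_apply scl_apply)
    also have "\<dots> = (\<Sum>j<n i. if t = j then c (i, j) else 0)"
      by (rule sum.cong) (auto simp: ev_def)
    also have "\<dots> = (if t < n i then c (i, t) else 0)" by (simp add: sum.delta)
    also have "\<dots> = blk c i t" using c i by (auto simp: blk_def Fvecs_def)
    finally show "blk c i t = (\<Sum>j<n i. scl (c (i, j)) (ev j)) t" by simp
  qed
  also have "\<dots> \<in> fv.span (kvecs K (n i))"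
  proof (intro fv.span_sum fv.span_scale fv.span_base)
    fix j assume "j \<in> {..<n i}"
    then show "ev j \<in> kvecs K (n i)" using K by (auto simp: ev_def kvecs_def subfield_def)
  qed
  finally show ?thesis .
qed

theorem mainTheorem8:
  fixes l :: nat and n :: "nat \<Rightarrow> nat" and K :: "nat \<Rightarrow> 'a::{field,finite} set"
    and \<beta> :: "nat \<Rightarrow> 'a list" and C :: "(nat \<times> nat \<Rightarrow> 'a) set" and k i :: nat
  assumes "0 < l" and "\<forall>i<l. 0 < n i"
    and "\<forall>i<l. subfield (K i)"
    and "\<forall>i<l. field_basis (K i) (\<beta> i)"
    and "C \<subseteq> Fvecs l n" and "ksubspace (UNIV :: 'a set) C"
    and "kdim (UNIV :: 'a set) C = k"
    and "1 \<le> i" and "i \<le> k"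
  shows "dS l n K C i = dSR l n K \<beta> C i"
proof -
  note K = assms(3) and fb = assms(4) and CF = assms(5)
  have Cs: "fv.subspace C" using assms(6) ksubspace_UNIV by blast
  have fC: "finite C" using finite_subset[OF CF[unfolded Fvecs_FS] finite_FS[OF finite_Iset]] .
  define g where "g L = fv.dim (C \<inter> VL l n K \<beta> L)" for L
  have null: "nullityC l n K C L = g L" if "L \<in> Plat l n K" for L
    unfolding g_def by (rule nullity_eq[OF K fb Plat_sub[OF that] CF Cs])
  have kd: "kdim UNIV (C \<inter> VL l n K \<beta> L) = g L" if "L \<in> Plat l n K" for L
  proof -
    have "fv.subspace (VL l n K \<beta> L)"
      using VL_char[OF K fb Plat_sub[OF that]] subspace_blkspan by simp
    then have "fv.subspace (C \<inter> VL l n K \<beta> L)" using Cs fv.subspace_inter by blast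
    moreover have "finite (C \<inter> VL l n K \<beta> L)" using fC by simp
    ultimately show ?thesis unfolding g_def by (rule kdim_UNIV)
  qed
  define S1 where "S1 = {Rk l K L | L. L \<in> Plat l n K \<and> g L = i}"
  define S2 where "S2 = {Rk l K L | L. L \<in> Plat l n K \<and> i \<le> g L}"
  have e1: "dS l n K C i = Min S1"
    unfolding dS_def S1_def by (rule arg_cong[where f=Min]) (auto simp: null)
  have e2: "dSR l n K \<beta> C i = Min S2"
    unfolding dSR_def S2_def by (rule arg_cong[where f=Min]) (auto simp: kd)
  have bound: "Rk l K L \<le> (\<Sum>i<l. n i)" if L: "L \<in> Plat l n K" for L
  proof -
    have "kdim (K i) (L i) \<le> n i" if i: "i < l" for i
    proof -
      have Li: "ksubspace (K i) (L i)" "L i \<subseteq> kvecs (K i) (n i)" using Plat_sub[OF L] i by auto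
      have "kdim (K i) (L i) = fv.dim (L i)" using kdim_K[of "K i" "\<beta> i"] K fb Li i by auto
      also have "\<dots> \<le> fv.dim (FS {..<n i} :: (nat \<Rightarrow> 'a) set)"
        by (rule dim_sub_le[OF subspace_FS finite_FS[OF finite_lessThan]])
           (use Li(2) kvecs_sub_FS in blast)
      also have "\<dots> = n i" by (simp add: dim_FS)
      finally show ?thesis .
    qed
    then show ?thesis unfolding Rk_def by (intro sum_mono) auto
  qed
  have fS2: "finite S2"
    by (rule finite_subset[of _ "{..(\<Sum>i<l. n i)}"]) (auto simp: S2_def bound)
  have S12: "S1 \<subseteq> S2" by (auto simp: S1_def S2_def)
  have fS1: "finite S1" using finite_subset[OF S12 fS2] .
  define Lf where "Lf j = (if j < l then kvecs (K j) (n j) else {\<lambda>_. 0})" for j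
  have LfP: "Lf \<in> Plat l n K"
    unfolding Plat_def Lf_def using K ksubspace_kvecs by auto
  have "VL l n K \<beta> Lf = {c \<in> Fvecs l n. \<forall>i<l. blk c i \<in> fv.span (Lf i)}"
    by (rule VL_char[OF K fb Plat_sub[OF LfP]])
  also have "\<dots> = Fvecs l n"
    using K by (auto simp: Lf_def intro!: blk_in_span_kvecs)
  finally have "VL l n K \<beta> Lf = Fvecs l n" .
  then have "g Lf = fv.dim C" using CF by (simp add: g_def Int_absorb2)
  also have "\<dots> = k" using kdim_UNIV[OF Cs fC] assms(7) by simp
  finally have "Rk l K Lf \<in> S2" using LfP assms(9) unfolding S2_def by blast
  then have ne2: "S2 \<noteq> {}" by blast
  have "Min S2 \<in> S2" using Min_in[OF fS2 ne2] .
  then have "\<exists>L0. L0 \<in> Plat l n K \<and> Rk l K L0 = Min S2 \<and> i \<le> g L0" unfolding S2_def by force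
  then obtain L0 where L0: "L0 \<in> Plat l n K" "Rk l K L0 = Min S2" "i \<le> g L0" by blast
  have gL0: "g L0 = i"
  proof (rule ccontr)
    assume "g L0 \<noteq> i"
    then have gt: "g L0 > i" using L0(3) by simp
    then have "fv.dim (C \<inter> VL l n K \<beta> L0) > 0" unfolding g_def by simp
    then obtain L' where L': "L' \<in> Plat l n K" "Rk l K L' + 1 = Rk l K L0"
      "g L0 \<le> g L' + 1" using hyper[OF K fb CF Cs L0(1)] unfolding g_def by blast
    then have "Rk l K L' \<in> S2" using gt unfolding S2_def by force
    then have "Min S2 \<le> Rk l K L'" using Min_le[OF fS2] by blast
    then show False using L'(2) L0(2) by simp
  qed
  then have "Min S2 \<in> S1" unfolding S1_def using L0 by (intro CollectI exI[of _ L0]) simp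
  then have "Min S1 \<le> Min S2" using Min_le[OF fS1] by blast
  moreover have "Min S2 \<le> Min S1" using Min_antimono[OF S12 _ fS2] \<open>Min S2 \<in> S1\<close> by blast
  ultimately show ?thesis using e1 e2 by simp
qed

end
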